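(* Let $\varphi,\mu\in\mathcal{M}$. Then $\varphi\mu=\mu\varphi$ if and only if there exists $\nu\in G_M$ with $|\nu|\le 2$ such that $\mu=\nu\varphi\nu^{-1}$.
   Context: Fix $n\ge 2$, $W=\{1,\dots,n\}$, $M=\{n+1,\dots,2n\}$, $I=W\cup M$. Permutations compose right-to-left. A matching is a permutation $\mu$ of $I$ with $\mu(W)=M$, $\mu(M)=W$ and $\mu(\mu(z))=z$ for all $z\in I$; $\mathcal{M}$ is the set of matchings. $G_M=\{\nu\in\mathrm{Sym}(I):\nu(x)=x\text{ for all }x\in W\}$. $|\nu|$ denotes the order of the permutation $\nu$. *)

theory Defs
  imports "HOL-Combinatorics.Permutations"
begin

definition Wset :: "nat \<Rightarrow> nat set" where "Wset n = {1..n}"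
definition Mset :: "nat \<Rightarrow> nat set" where "Mset n = {n+1..2*n}"
definition Iset :: "nat \<Rightarrow> nat set" where "Iset n = Wset n \<union> Mset n"

text \<open>Permutations of I are functions that permute I (identity outside I); composition is f \<circ> g.\<close>

definition matchings :: "nat \<Rightarrow> (nat \<Rightarrow> nat) set" where
  "matchings n = {\<mu>. \<mu> permutes Iset n \<and> \<mu> ` Wset n = Mset n \<and> \<mu> ` Mset n = Wset n
                      \<and> (\<forall>z\<in>Iset n. \<mu> (\<mu> z) = z)}"

definition G_M :: "nat \<Rightarrow> (nat \<Rightarrow> nat) set" where
  "G_M n = {\<nu>. \<nu> permutes Iset n \<and> (\<forall>x\<in>Wset n. \<nu> x = x)}"

definition perm_order :: "(nat \<Rightarrow> nat) \<Rightarrow> nat" where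
  "perm_order \<nu> = (LEAST k. 0 < k \<and> (\<nu> ^^ k) = id)"

end

theory Submission
  imports Defs "HOL-Combinatorics.Cycles"
begin

lemma match_facts:
  assumes "f \<in> matchings n"
  shows "\<And>x. x \<in> Wset n \<Longrightarrow> f x \<in> Mset n"
    and "\<And>x. x \<in> Mset n \<Longrightarrow> f x \<in> Wset n"
    and "\<And>x. x \<notin> Iset n \<Longrightarrow> f x = x"
    and "\<And>x. f (f x) = x"
proof -
  have p: "f permutes Iset n" and w: "f ` Wset n = Mset n" and m: "f ` Mset n = Wset n"
    and inv: "\<forall>z\<in>Iset n. f (f z) = z" using assms unfolding matchings_def by auto
  show "\<And>x. x \<in> Wset n \<Longrightarrow> f x \<in> Mset n" using w by blast
  show "\<And>x. x \<in> Mset n \<Longrightarrow> f x \<in> Wset n" using m by blast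
  show nI: "\<And>x. x \<notin> Iset n \<Longrightarrow> f x = x" using p permutes_not_in by metis
  show "\<And>x. f (f x) = x" using inv nI by metis
qed

lemma WM_disj: "x \<in> Wset n \<Longrightarrow> x \<notin> Mset n"
  unfolding Wset_def Mset_def by auto

lemma I_cases: "x \<in> Iset n \<longleftrightarrow> x \<in> Wset n \<or> x \<in> Mset n"
  unfolding Iset_def by auto

theorem proposition19:
  fixes n :: nat and \<phi> \<mu> :: "nat \<Rightarrow> nat"
  assumes "n \<ge> 2"
    and "\<phi> \<in> matchings n" and "\<mu> \<in> matchings n"
  shows "\<phi> \<circ> \<mu> = \<mu> \<circ> \<phi> \<longleftrightarrow>
         (\<exists>\<nu>\<in>G_M n. perm_order \<nu> \<le> 2 \<and> \<mu> = \<nu> \<circ> \<phi> \<circ> inv \<nu>)"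
proof
  note F = match_facts[OF assms(2)]
  note U = match_facts[OF assms(3)]
  assume c: "\<phi> \<circ> \<mu> = \<mu> \<circ> \<phi>"
  hence c': "\<And>x. \<phi> (\<mu> x) = \<mu> (\<phi> x)" by (metis comp_apply)
  define \<nu> where "\<nu> = (\<lambda>x. if x \<in> Mset n then \<mu> (\<phi> x) else x)"
  have nM: "\<And>x. x \<in> Mset n \<Longrightarrow> \<nu> x \<in> Mset n"
    unfolding \<nu>_def using F U by auto
  have nn: "\<And>x. \<nu> (\<nu> x) = x"
  proof -
    fix x show "\<nu> (\<nu> x) = x"
    proof (cases "x \<in> Mset n")
      case True
      then show ?thesis using nM[OF True] unfolding \<nu>_def
        by (simp add: True c'[symmetric] U(4) F(4))
    qed (simp add: \<nu>_def)
  qed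
  have nnid: "\<nu> \<circ> \<nu> = id" using nn by (auto simp: fun_eq_iff)
  have bij: "bij \<nu>" using nn by (metis bij_betw_def inj_def surjI)
  have perm: "\<nu> permutes Iset n"
    unfolding permutes_def
  proof (intro conjI allI impI)
    fix x assume "x \<notin> Iset n" thus "\<nu> x = x" unfolding \<nu>_def I_cases by auto
  next
    fix y show "\<exists>!x. \<nu> x = y"
    proof (rule ex1I[of _ "\<nu> y"])
      show "\<nu> (\<nu> y) = y" by (rule nn)
    next
      fix x assume "\<nu> x = y" thus "x = \<nu> y" using nn[of x] by simp
    qed
  qed
  have inv: "inv \<nu> = \<nu>" using nnid by (metis inv_unique_comp)
  have GM: "\<nu> \<in> G_M n" unfolding G_M_def \<nu>_def using perm \<nu>_def WM_disj by auto
  have ord: "perm_order \<nu> \<le> 2" unfolding perm_order_def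
    by (rule Least_le) (simp add: nnid numeral_2_eq_2)
  have "\<mu> = \<nu> \<circ> \<phi> \<circ> \<nu>"
  proof (rule ext)
    fix x
    consider "x \<in> Wset n" | "x \<in> Mset n" | "x \<notin> Iset n" using I_cases by blast
    then show "\<mu> x = (\<nu> \<circ> \<phi> \<circ> \<nu>) x"
    proof cases
      case 1
      then show ?thesis using F(1)[OF 1] WM_disj[OF 1] by (simp add: \<nu>_def F(4))
    next
      case 2
      have a: "\<mu> (\<phi> x) \<in> Mset n" using U(1) F(2) 2 by blast
      have b: "\<phi> (\<mu> (\<phi> x)) \<in> Wset n" using F(2) a by blast
      show ?thesis using 2 a b WM_disj[OF b] by (simp add: \<nu>_def c' F(4))
    next
      case 3
      then show ?thesis using F U unfolding \<nu>_def I_cases by auto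
    qed
  qed
  thus "\<exists>\<nu>\<in>G_M n. perm_order \<nu> \<le> 2 \<and> \<mu> = \<nu> \<circ> \<phi> \<circ> inv \<nu>"
    using GM ord inv by metis
next
  note F = match_facts[OF assms(2)]
  assume "\<exists>\<nu>\<in>G_M n. perm_order \<nu> \<le> 2 \<and> \<mu> = \<nu> \<circ> \<phi> \<circ> inv \<nu>"
  then obtain \<nu> where GM: "\<nu> \<in> G_M n" and ord: "perm_order \<nu> \<le> 2"
    and mu: "\<mu> = \<nu> \<circ> \<phi> \<circ> inv \<nu>" by blast
  have perm: "\<nu> permutes Iset n" and fixW: "\<And>x. x \<in> Wset n \<Longrightarrow> \<nu> x = x"
    using GM unfolding G_M_def by auto
  have "permutation \<nu>" proof -
    have "finite (Iset n)" unfolding Iset_def Wset_def Mset_def by simp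
    thus ?thesis using perm permutation_permutes by blast
  qed
  then obtain k where k: "\<nu> ^^ k = id" "k > 0" by (rule permutation_is_nilpotent)
  define L where "L = (LEAST k. 0 < k \<and> (\<nu> ^^ k) = id)"
  have L: "0 < L \<and> \<nu> ^^ L = id" unfolding L_def by (rule LeastI[of _ k]) (use k in auto)
  have "L \<le> 2" using ord unfolding perm_order_def L_def .
  hence "L = 1 \<or> L = 2" using L by auto
  hence nnid: "\<nu> \<circ> \<nu> = id" using L
    by (auto simp: numeral_2_eq_2)
  have nn: "\<And>x. \<nu> (\<nu> x) = x" using nnid by (metis comp_apply id_apply)
  have inv: "inv \<nu> = \<nu>" using nnid by (metis inv_unique_comp)
  have nM: "\<And>x. x \<in> Mset n \<Longrightarrow> \<nu> x \<in> Mset n"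
  proof -
    fix x assume x: "x \<in> Mset n"
    have "\<nu> x \<in> Iset n" using x permutes_in_image[OF perm] I_cases by simp
    moreover have "\<nu> x \<notin> Wset n"
    proof
      assume a: "\<nu> x \<in> Wset n"
      hence "\<nu> (\<nu> x) = \<nu> x" using fixW by blast
      hence "x = \<nu> x" using nn[of x] by simp
      thus False using a x WM_disj by simp
    qed
    ultimately show "\<nu> x \<in> Mset n" using I_cases by blast
  qed
  have nI: "\<And>x. x \<notin> Iset n \<Longrightarrow> \<nu> x = x" using perm permutes_not_in by metis
  have mu': "\<And>x. \<mu> x = \<nu> (\<phi> (\<nu> x))" using mu inv by simp
  show "\<phi> \<circ> \<mu> = \<mu> \<circ> \<phi>"
  proof (rule ext)
    fix x
    consider "x \<in> Wset n" | "x \<in> Mset n" | "x \<notin> Iset n" using I_cases by blast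
    then show "(\<phi> \<circ> \<mu>) x = (\<mu> \<circ> \<phi>) x"
    proof cases
      case 1
      have a: "\<nu> (\<phi> x) \<in> Mset n" using nM F(1) 1 by blast
      have b: "\<phi> (\<nu> (\<phi> x)) \<in> Wset n" using F(2) a by blast
      show ?thesis using 1 b by (simp add: mu' fixW F(4))
    next
      case 2
      have a: "\<nu> x \<in> Mset n" using nM 2 by blast
      have b: "\<phi> (\<nu> x) \<in> Wset n" using F(2) a by blast
      have c: "\<phi> x \<in> Wset n" using F(2) 2 by blast
      show ?thesis using b c by (simp add: mu' fixW F(4) nn)
    next
      case 3
      then show ?thesis using F nI by (simp add: mu')
    qed
  qed
qed

end
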